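(* Any two countable dense subsets of the Urysohn space $\mathbb U$ are almost isometric.
   Context: $\mathbb U$ denotes Urysohn's universal separable metric space: the unique (up to isometry) complete separable metric space such that for every finite metric space $F=\{x_0,\dots,x_n\}$, every isometry $\{x_0,\dots,x_{n-1}\}\to\mathbb U$ extends to an isometry $F\to\mathbb U$. For $\lambda>1$, an injection $f$ is $\lambda$-bi-Lipschitz if for all distinct $a,b$ in its domain $d(f(a),f(b))<\lambda d(a,b)$ and $d(a,b)<\lambda d(f(a),f(b))$. Two metric spaces $X,Y$ are almost isometric if for every $\lambda>1$ there is a $\lambda$-bi-Lipschitz bijection from $X$ onto $Y$. *)

theory Defs
  imports "HOL-Analysis.Analysis"
begin

text \<open>A finite metric space with n+1 points is encoded as {0..n} with a distance
  function d (metric axioms on {0..n}).\<close>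
definition fin_metric :: "nat \<Rightarrow> (nat \<Rightarrow> nat \<Rightarrow> real) \<Rightarrow> bool" where
  "fin_metric n d \<longleftrightarrow>
     (\<forall>i\<le>n. \<forall>j\<le>n. (d i j = 0 \<longleftrightarrow> i = j) \<and> d i j = d j i) \<and>
     (\<forall>i\<le>n. \<forall>j\<le>n. \<forall>k\<le>n. d i k \<le> d i j + d j k)"

definition finite_extension_property :: "'a::metric_space itself \<Rightarrow> bool" where
  "finite_extension_property _ \<longleftrightarrow>
     (\<forall>n d (f :: nat \<Rightarrow> 'a). fin_metric n d \<and>
        (\<forall>i<n. \<forall>j<n. dist (f i) (f j) = d i j) \<longrightarrow>
        (\<exists>g :: nat \<Rightarrow> 'a. (\<forall>i<n. g i = f i) \<and>
            (\<forall>i\<le>n. \<forall>j\<le>n. dist (g i) (g j) = d i j)))"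

definition is_urysohn :: "'a::metric_space itself \<Rightarrow> bool" where
  "is_urysohn T \<longleftrightarrow> complete (UNIV :: 'a set) \<and>
     (\<exists>D :: 'a set. countable D \<and> closure D = UNIV) \<and>
     finite_extension_property T"

definition bi_lipschitz :: "real \<Rightarrow> ('a::metric_space \<Rightarrow> 'b::metric_space) \<Rightarrow> 'a set \<Rightarrow> bool" where
  "bi_lipschitz lam f A \<longleftrightarrow> inj_on f A \<and>
     (\<forall>a\<in>A. \<forall>b\<in>A. a \<noteq> b \<longrightarrow>
        dist (f a) (f b) < lam * dist a b \<and> dist a b < lam * dist (f a) (f b))"

definition almost_isometric :: "'a::metric_space set \<Rightarrow> 'b::metric_space set \<Rightarrow> bool" where
  "almost_isometric X Y \<longleftrightarrow>
     (\<forall>lam > 1. \<exists>f. bij_betw f X Y \<and> bi_lipschitz lam f X)"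

end

theory Submission
  imports Defs
begin


definition goodrel :: "real \<Rightarrow> ('a::metric_space \<times> 'a) set \<Rightarrow> bool" where
 "goodrel lam R \<longleftrightarrow> finite R \<and> (\<forall>p\<in>R. \<forall>q\<in>R. (fst p = fst q \<longleftrightarrow> snd p = snd q) \<and>
    (fst p \<noteq> fst q \<longrightarrow> dist (snd p) (snd q) < lam * dist (fst p) (fst q) \<and>
        dist (fst p) (fst q) < lam * dist (snd p) (snd q)))"

lemma goodrel_converse: "goodrel lam (converse R) \<longleftrightarrow> goodrel lam R"
proof -
  have e: "(\<forall>p\<in>converse R. P p) \<longleftrightarrow> (\<forall>p\<in>R. P (snd p, fst p))" for P :: "_ \<Rightarrow> bool"
    by auto
  show ?thesis unfolding goodrel_def finite_converse e
    by (simp add: dist_commute) blast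
qed

lemma open_target:
  fixes x :: "'a::metric_space"
  assumes "finite R"
  shows "open {z. \<forall>p\<in>R. dist z (snd p) < lam * dist x (fst p) \<and> dist x (fst p) < lam * dist z (snd p)}"
proof -
  have "{z. \<forall>p\<in>R. dist z (snd p) < lam * dist x (fst p) \<and> dist x (fst p) < lam * dist z (snd p)}
     = (\<Inter>p\<in>R. {z. dist z (snd p) < lam * dist x (fst p)} \<inter> {z. dist x (fst p) < lam * dist z (snd p)})"
    by auto
  moreover have "open ({z. dist z (snd p) < lam * dist x (fst p)} \<inter> {z. dist x (fst p) < lam * dist z (snd p)})" for p
    by (intro open_Int open_Collect_less continuous_intros)
  then have "open (\<Inter>p\<in>R. {z. dist z (snd p) < lam * dist x (fst p)} \<inter> {z. dist x (fst p) < lam * dist z (snd p)})"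
    using assms by (intro open_INT) auto
  ultimately show ?thesis by simp
qed

lemma katetov:
  fixes x :: "'a::metric_space"
  assumes fin: "finite R" and ne: "R \<noteq> {}"
    and G: "G = (\<lambda>z. Min ((\<lambda>p. mu * dist x (fst p) + dist z (snd p)) ` R))"
  shows "G z \<le> G z' + dist z z'"
    and "\<And>p. p \<in> R \<Longrightarrow> G z \<le> mu * dist x (fst p) + dist z (snd p)"
    and "\<exists>p\<in>R. G z = mu * dist x (fst p) + dist z (snd p)"
proof -
  show le: "\<And>p. p \<in> R \<Longrightarrow> G z \<le> mu * dist x (fst p) + dist z (snd p)" for z
    unfolding G using fin by (intro Min_le) auto
  show ex: "\<exists>p\<in>R. G z = mu * dist x (fst p) + dist z (snd p)" for z
  proof -
    have "G z \<in> ((\<lambda>p. mu * dist x (fst p) + dist z (snd p)) ` R)"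
      unfolding G using fin ne by (intro Min_in) auto
    then show ?thesis by auto
  qed
  obtain p where p: "p \<in> R" "G z' = mu * dist x (fst p) + dist z' (snd p)" using ex by blast
  have "G z \<le> mu * dist x (fst p) + dist z (snd p)" using le p(1) .
  also have "\<dots> \<le> mu * dist x (fst p) + dist z' (snd p) + dist z z'"
    using dist_triangle[of z "snd p" z'] by linarith
  finally show "G z \<le> G z' + dist z z'" using p by linarith
qed



lemma exists_u:
  fixes x :: "'a::metric_space"
  assumes fep: "finite_extension_property TYPE('a)"
    and lam: "lam > 1" and gR: "goodrel lam R" and x: "x \<notin> fst ` R" and ne: "R \<noteq> {}"
  shows "\<exists>u. \<forall>p\<in>R. dist u (snd p) < lam * dist x (fst p) \<and> dist x (fst p) < lam * dist u (snd p)"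
proof -
  have fin: "finite R" using gR unfolding goodrel_def by auto
  have gR2: "\<And>p q. p \<in> R \<Longrightarrow> q \<in> R \<Longrightarrow> (fst p = fst q \<longleftrightarrow> snd p = snd q) \<and>
    (fst p \<noteq> fst q \<longrightarrow> dist (snd p) (snd q) < lam * dist (fst p) (fst q) \<and>
        dist (fst p) (fst q) < lam * dist (snd p) (snd q))"
    using gR unfolding goodrel_def by blast
  have xpos: "\<And>p. p \<in> R \<Longrightarrow> 0 < dist x (fst p)" using x by force
  define h where "h = (\<lambda>(p::'a\<times>'a,q::'a\<times>'a). if fst p = fst q then 1 else dist (snd p) (snd q) / dist (fst p) (fst q))"
  define M where "M = Max (insert 1 (h ` (R \<times> R)))"
  have hlt: "h pq < lam" if pqR: "pq \<in> R \<times> R" for pq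
  proof -
    obtain p q where pq: "pq = (p,q)" "p \<in> R" "q \<in> R" using pqR by blast
    show ?thesis
    proof (cases "fst p = fst q")
      case True then show ?thesis using lam pq by (simp add: h_def)
    next
      case False
      then have "dist (snd p) (snd q) < lam * dist (fst p) (fst q)" "0 < dist (fst p) (fst q)"
        using gR2[OF pq(2,3)] by auto
      then show ?thesis using False pq by (simp add: h_def pos_divide_less_eq)
    qed
  qed
  have Mlt: "M < lam" unfolding M_def using fin lam hlt by (subst Max_less_iff) auto
  have M1: "1 \<le> M" unfolding M_def using fin by (intro Max_ge) auto
  have Mge: "h pq \<le> M" if "pq \<in> R \<times> R" for pq unfolding M_def using fin that by (intro Max_ge) auto
  define mu where "mu = (M + lam) / 2"
  have mu: "1 < mu" "mu < lam" "M \<le> mu" using Mlt M1 unfolding mu_def by auto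
  have Lip: "dist (snd p) (snd q) \<le> mu * dist (fst p) (fst q)" if "p \<in> R" "q \<in> R" for p q
  proof (cases "fst p = fst q")
    case True then show ?thesis using gR2[OF that] by simp
  next
    case False
    then have "0 < dist (fst p) (fst q)" by simp
    moreover have "dist (snd p) (snd q) / dist (fst p) (fst q) \<le> mu"
      using Mge[of "(p,q)"] that False mu by (simp add: h_def)
    ultimately show ?thesis by (simp add: pos_divide_le_eq mult.commute)
  qed
  define G where "G = (\<lambda>z. Min ((\<lambda>p. mu * dist x (fst p) + dist z (snd p)) ` R))"
  note K = katetov[OF fin ne G_def]
  have Gpos: "0 < G z" for z
  proof -
    obtain p where "p \<in> R" "G z = mu * dist x (fst p) + dist z (snd p)" using K(3) by blast
    then show ?thesis using xpos[of p] mu by (simp add: add_pos_nonneg)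
  qed
  have K2: "dist (snd p) (snd q) \<le> G (snd p) + G (snd q)" if "p \<in> R" "q \<in> R" for p q
  proof -
    obtain p' where p': "p' \<in> R" "G (snd p) = mu * dist x (fst p') + dist (snd p) (snd p')" using K(3) by blast
    obtain q' where q': "q' \<in> R" "G (snd q) = mu * dist x (fst q') + dist (snd q) (snd q')" using K(3) by blast
    have "dist (snd p') (snd q') \<le> mu * dist (fst p') (fst q')" using Lip p'(1) q'(1) by blast
    also have "\<dots> \<le> mu * (dist x (fst p') + dist x (fst q'))"
      using mu by (intro mult_left_mono dist_triangle3) auto
    finally have a: "dist (snd p') (snd q') \<le> mu * dist x (fst p') + mu * dist x (fst q')"
      by (simp add: algebra_simps)
    have "dist (snd p) (snd q) \<le> dist (snd p) (snd p') + dist (snd p') (snd q') + dist (snd q') (snd q)"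
      using dist_triangle[of "snd p" "snd q" "snd p'"] dist_triangle[of "snd p'" "snd q" "snd q'"] by linarith
    then show ?thesis using a p' q' by (simp add: dist_commute)
  qed
  have up: "G (snd p) < lam * dist x (fst p)" if "p \<in> R" for p
  proof -
    have "G (snd p) \<le> mu * dist x (fst p)" using K(2)[OF that, of "snd p"] by simp
    also have "\<dots> < lam * dist x (fst p)" using mu xpos[OF that] by simp
    finally show ?thesis .
  qed
  have low: "dist x (fst p) < lam * G (snd p)" if "p \<in> R" for p
  proof -
    obtain p' where p': "p' \<in> R" "G (snd p) = mu * dist x (fst p') + dist (snd p) (snd p')" using K(3) by blast
    have lm: "1 < lam * mu" using lam mu by (metis less_1_mult less_trans)
    show ?thesis
    proof (cases "fst p = fst p'")
      case True
      then have "snd p = snd p'" using gR2[OF that p'(1)] by simp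
      then have "G (snd p) = mu * dist x (fst p)" using p' True by simp
      moreover have "dist x (fst p) < (lam * mu) * dist x (fst p)" using lm xpos[OF that] by simp
      ultimately show ?thesis by (simp add: mult.assoc)
    next
      case False
      then have a: "dist (fst p) (fst p') < lam * dist (snd p) (snd p')" using gR2[OF that p'(1)] by auto
      have b: "dist x (fst p') \<le> (lam * mu) * dist x (fst p')"
        using lm mult_right_mono[of 1 "lam * mu" "dist x (fst p')"] by simp
      have c: "dist x (fst p) \<le> dist x (fst p') + dist (fst p) (fst p')"
        using dist_triangle[of x "fst p" "fst p'"] by (simp add: dist_commute)
      have "lam * G (snd p) = (lam * mu) * dist x (fst p') + lam * dist (snd p) (snd p')"
        using p' by (simp add: algebra_simps)
      then show ?thesis using a b c by linarith
    qed
  qed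
  define n where "n = card R"
  obtain e where e: "bij_betw e {0..<n} R" using ex_bij_betw_nat_finite[OF fin] n_def by blast
  define fb where "fb = (\<lambda>i. snd (e i))"
  have eR: "i < n \<Longrightarrow> e i \<in> R" for i using e by (auto simp: bij_betw_def)
  have Inj: "i = j" if "i < n" "j < n" "fb i = fb j" for i j
  proof -
    have "fst (e i) = fst (e j)" using gR2[OF eR[OF that(1)] eR[OF that(2)]] that(3) fb_def by simp
    then have "e i = e j" using that(3) fb_def by (simp add: prod_eq_iff)
    then show ?thesis using e that unfolding bij_betw_def inj_on_def by auto
  qed
  define d where "d = (\<lambda>i j. if i < n \<and> j < n then dist (fb i) (fb j) else if i < n then G (fb i)
     else if j < n then G (fb j) else 0)"
  have K2': "dist (fb i) (fb k) \<le> G (fb i) + G (fb k)" if "i < n" "k < n" for i k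
    using K2[OF eR[OF that(1)] eR[OF that(2)]] fb_def by simp
  have fm: "fin_metric n d"
    unfolding fin_metric_def
  proof (intro conjI allI impI)
    fix i j assume "i \<le> n" "j \<le> n"
    then have "i < n \<or> i = n" "j < n \<or> j = n" by auto
    moreover have "0 < G (fb i)" "0 < G (fb j)" using Gpos by auto
    ultimately show "(d i j = 0) = (i = j)" using Inj[of i j] unfolding d_def
      by auto
    show "d i j = d j i" unfolding d_def by (simp add: dist_commute)
  next
    fix i j k assume "i \<le> n" "j \<le> n" "k \<le> n"
    have t0: "dist (fb i) (fb k) \<le> dist (fb i) (fb j) + dist (fb j) (fb k)" by (rule dist_triangle)
    have t1: "G (fb i) \<le> G (fb j) + dist (fb i) (fb j)" using K(1)[of "fb i" "fb j"] by simp
    have t3: "G (fb k) \<le> G (fb j) + dist (fb j) (fb k)" using K(1)[of "fb k" "fb j"] by (simp add: dist_commute)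
    have t2: "i < n \<Longrightarrow> k < n \<Longrightarrow> dist (fb i) (fb k) \<le> G (fb i) + G (fb k)" by (rule K2')
    have p: "0 < G (fb i)" "0 < G (fb j)" "0 < G (fb k)" using Gpos by auto
    show "d i k \<le> d i j + d j k"
      unfolding d_def using t0 t1 t2 t3 p by (simp split: if_split) linarith?
  qed
  have "\<forall>i<n. \<forall>j<n. dist (fb i) (fb j) = d i j" unfolding d_def by simp
  then obtain g where g: "\<forall>i<n. g i = fb i" "\<forall>i\<le>n. \<forall>j\<le>n. dist (g i) (g j) = d i j"
    using fep fm unfolding finite_extension_property_def by blast
  have "dist (g n) (snd p) = G (snd p)" if pR: "p \<in> R" for p
  proof -
    obtain i where i: "i < n" "e i = p" using e pR unfolding bij_betw_def by auto
    then have "dist (g n) (g i) = d n i" using g(2) by simp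
    then show ?thesis using i g(1) by (simp add: d_def fb_def)
  qed
  then show ?thesis using up low by (intro exI[of _ "g n"]) auto
qed



lemma forth_step:
  fixes Y :: "'a::metric_space set"
  assumes fep: "finite_extension_property TYPE('a)" and dY: "closure Y = UNIV"
    and lam: "lam > 1" and gR: "goodrel lam R" and x: "x \<notin> fst ` R"
  shows "\<exists>y\<in>Y. goodrel lam (insert (x,y) R)"
proof -
  have fin: "finite R" using gR unfolding goodrel_def by auto
  have gR2: "\<And>p q. p \<in> R \<Longrightarrow> q \<in> R \<Longrightarrow> (fst p = fst q \<longleftrightarrow> snd p = snd q) \<and>
    (fst p \<noteq> fst q \<longrightarrow> dist (snd p) (snd q) < lam * dist (fst p) (fst q) \<and>
        dist (fst p) (fst q) < lam * dist (snd p) (snd q))"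
    using gR unfolding goodrel_def by blast
  have xpos: "\<And>p. p \<in> R \<Longrightarrow> 0 < dist x (fst p)" using x by force
  define S where "S = {z. \<forall>p\<in>R. dist z (snd p) < lam * dist x (fst p) \<and> dist x (fst p) < lam * dist z (snd p)}"
  have oS: "open S" unfolding S_def by (rule open_target[OF fin])
  obtain u where u: "u \<in> S"
  proof (cases "R = {}")
    case True then show ?thesis using that unfolding S_def by auto
  next
    case False then show ?thesis using exists_u[OF fep lam gR x] that unfolding S_def by auto
  qed
  then have "S \<inter> closure Y \<noteq> {}" using dY by auto
  then have "S \<inter> Y \<noteq> {}" using open_Int_closure_eq_empty[OF oS] by auto
  then obtain y where y: "y \<in> Y" "y \<in> S" by auto
  have yb: "\<forall>p\<in>R. dist y (snd p) < lam * dist x (fst p) \<and> dist x (fst p) < lam * dist y (snd p)"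
    using y(2) unfolding S_def by auto
  have yne: "y \<noteq> snd p" if "p \<in> R" for p
    using yb that xpos[OF that] by fastforce
  have xne: "x \<noteq> fst p" if "p \<in> R" for p using x that by force
  have "goodrel lam (insert (x,y) R)"
    unfolding goodrel_def
  proof (intro conjI ballI)
    show "finite (insert (x, y) R)" using fin by simp
  next
    fix p q assume p: "p \<in> insert (x, y) R" and q: "q \<in> insert (x, y) R"
    have pp: "p = (x,y) \<or> p \<in> R" and qq: "q = (x,y) \<or> q \<in> R" using p q by auto
    show "(fst p = fst q) = (snd p = snd q)"
      using pp qq gR2[of p q] xne[of p] xne[of q] yne[of p] yne[of q] by auto
    show "fst p \<noteq> fst q \<longrightarrow> dist (snd p) (snd q) < lam * dist (fst p) (fst q) \<and>
        dist (fst p) (fst q) < lam * dist (snd p) (snd q)"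
      using p q gR2 yb by (auto simp: dist_commute)
  qed
  then show ?thesis using y by blast
qed

lemma back_step:
  fixes X :: "'a::metric_space set"
  assumes fep: "finite_extension_property TYPE('a)" and dX: "closure X = UNIV"
    and lam: "lam > 1" and gR: "goodrel lam R" and y: "y \<notin> snd ` R"
  shows "\<exists>x\<in>X. goodrel lam (insert (x,y) R)"
proof -
  have "goodrel lam (converse R)" using gR goodrel_converse by blast
  moreover have "y \<notin> fst ` converse R" using y by force
  ultimately obtain x where "x \<in> X" "goodrel lam (insert (y,x) (converse R))"
    using forth_step[OF fep dX lam] by blast
  moreover have "insert (y,x) (converse R) = converse (insert (x,y) R)" by auto
  ultimately show ?thesis using goodrel_converse by metis
qed



theorem theorem3p6:
  fixes X Y :: "'a::metric_space set"
  assumes "is_urysohn TYPE('a)"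
    and "countable X" and "closure X = UNIV"
    and "countable Y" and "closure Y = UNIV"
  shows "almost_isometric X Y"
  unfolding almost_isometric_def
proof (intro allI impI)
  fix lam :: real assume lam: "lam > 1"
  have fep: "finite_extension_property TYPE('a)" using assms(1) unfolding is_urysohn_def by blast
  have Xne: "X \<noteq> {}" using assms(3) by auto
  have Yne: "Y \<noteq> {}" using assms(5) by auto
  define ex where "ex = from_nat_into X"
  define ey where "ey = from_nat_into Y"
  have rex: "range ex = X" using Xne assms(2) ex_def by simp
  have rey: "range ey = Y" using Yne assms(4) ey_def by simp
  define fw where "fw = (\<lambda>R x. if x \<in> fst ` R then R else insert (x, SOME y. y \<in> Y \<and> goodrel lam (insert (x,y) R)) R)"
  define bw where "bw = (\<lambda>R y. if y \<in> snd ` R then R else insert (SOME x. x \<in> X \<and> goodrel lam (insert (x,y) R), y) R)"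
  have fw: "goodrel lam (fw R x) \<and> fw R x \<subseteq> X \<times> Y \<and> R \<subseteq> fw R x \<and> x \<in> fst ` fw R x"
    if R: "goodrel lam R" "R \<subseteq> X \<times> Y" and x: "x \<in> X" for R x
  proof (cases "x \<in> fst ` R")
    case True then show ?thesis using R unfolding fw_def by auto
  next
    case False
    have "\<exists>y. y \<in> Y \<and> goodrel lam (insert (x,y) R)" using forth_step[OF fep assms(5) lam R(1) False] by blast
    from someI_ex[OF this] show ?thesis using False R x unfolding fw_def by auto
  qed
  have bw: "goodrel lam (bw R y) \<and> bw R y \<subseteq> X \<times> Y \<and> R \<subseteq> bw R y \<and> y \<in> snd ` bw R y"
    if R: "goodrel lam R" "R \<subseteq> X \<times> Y" and y: "y \<in> Y" for R y
  proof (cases "y \<in> snd ` R")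
    case True then show ?thesis using R unfolding bw_def by auto
  next
    case False
    have "\<exists>x. x \<in> X \<and> goodrel lam (insert (x,y) R)" using back_step[OF fep assms(3) lam R(1) False] by blast
    from someI_ex[OF this] show ?thesis using False R y unfolding bw_def by auto
  qed
  define S where "S = rec_nat {} (\<lambda>n R. bw (fw R (ex n)) (ey n))"
  have S0: "S 0 = {}" and SS: "\<And>n. S (Suc n) = bw (fw (S n) (ex n)) (ey n)" by (simp_all add: S_def)
  have exX: "ex n \<in> X" for n using rex by auto
  have eyY: "ey n \<in> Y" for n using rey by auto
  have inv: "goodrel lam (S n) \<and> S n \<subseteq> X \<times> Y" for n
  proof (induction n)
    case 0 then show ?case by (simp add: S0 goodrel_def)
  next
    case (Suc n)
    then show ?case using fw[of "S n" "ex n"] bw[of "fw (S n) (ex n)" "ey n"] exX eyY SS by auto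
  qed
  have step: "S n \<subseteq> S (Suc n) \<and> ex n \<in> fst ` S (Suc n) \<and> ey n \<in> snd ` S (Suc n)" for n
  proof -
    have a: "goodrel lam (fw (S n) (ex n)) \<and> fw (S n) (ex n) \<subseteq> X \<times> Y \<and> S n \<subseteq> fw (S n) (ex n) \<and> ex n \<in> fst ` fw (S n) (ex n)"
      using fw inv exX by blast
    then have "goodrel lam (S (Suc n)) \<and> S (Suc n) \<subseteq> X \<times> Y \<and> fw (S n) (ex n) \<subseteq> S (Suc n) \<and> ey n \<in> snd ` S (Suc n)"
      using bw eyY SS by presburger
    then show ?thesis using a by blast
  qed
  have monoS: "m \<le> k \<Longrightarrow> S m \<subseteq> S k" for m k
    using lift_Suc_mono_le[of S m k] step by blast
  define F where "F = (\<Union>n. S n)"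
  have FXY: "F \<subseteq> X \<times> Y" using inv unfolding F_def by blast
  have Fg: "(fst p = fst q \<longleftrightarrow> snd p = snd q) \<and>
    (fst p \<noteq> fst q \<longrightarrow> dist (snd p) (snd q) < lam * dist (fst p) (fst q) \<and>
        dist (fst p) (fst q) < lam * dist (snd p) (snd q))" if pq: "p \<in> F" "q \<in> F" for p q
  proof -
    obtain m k where "p \<in> S m" "q \<in> S k" using pq unfolding F_def by blast
    then have "p \<in> S (max m k)" "q \<in> S (max m k)" using monoS[of m "max m k"] monoS[of k "max m k"] by auto
    then show ?thesis using inv[of "max m k"] unfolding goodrel_def by blast
  qed
  have dom: "\<exists>y. (x,y) \<in> F" if "x \<in> X" for x
  proof -
    obtain n where "x = ex n" using \<open>x \<in> X\<close> rex by auto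
    then show ?thesis using step[of n] unfolding F_def by force
  qed
  have ran: "\<exists>x. (x,y) \<in> F" if "y \<in> Y" for y
  proof -
    obtain n where "y = ey n" using \<open>y \<in> Y\<close> rey by auto
    then show ?thesis using step[of n] unfolding F_def by force
  qed
  define f where "f = (\<lambda>a. SOME b. (a,b) \<in> F)"
  have fF: "(a, f a) \<in> F" if "a \<in> X" for a unfolding f_def using dom[OF that] by (rule someI_ex)
  have inj: "inj_on f X"
  proof (rule inj_onI)
    fix a a' assume "a \<in> X" "a' \<in> X" "f a = f a'"
    then show "a = a'" using Fg[OF fF fF] by auto
  qed
  have img: "f ` X = Y"
  proof
    show "f ` X \<subseteq> Y" using fF FXY by auto
    show "Y \<subseteq> f ` X"
    proof
      fix y assume y: "y \<in> Y"
      then obtain x where x: "(x,y) \<in> F" using ran by blast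
      then have xX: "x \<in> X" using FXY by auto
      have "f x = y" using Fg[OF fF[OF xX] x] by simp
      then show "y \<in> f ` X" using xX by blast
    qed
  qed
  have "bi_lipschitz lam f X"
    unfolding bi_lipschitz_def
  proof (intro conjI inj ballI impI)
    fix a b assume "a \<in> X" "b \<in> X" "a \<noteq> b"
    then show "dist (f a) (f b) < lam * dist a b" "dist a b < lam * dist (f a) (f b)"
      using Fg[OF fF fF] by auto
  qed
  then show "\<exists>f. bij_betw f X Y \<and> bi_lipschitz lam f X"
    using inj img unfolding bij_betw_def by blast
qed


end
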